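(* Suppose $f:\mathbb{R}_{>0}\to\mathbb{R}_{\ge0}$ is twice differentiable at every $x>0$ with $f''(x)>0$ and $f'(1)=f(1)=0$. If there exist constants $L,U>0$ such that $L\le f''(x)\le U$ for all $x\in[\frac12,\frac32]$, then for every $\zeta\ge1$ and every $x\in(-\frac1{2\zeta},0)\cup(0,\frac1{2\zeta})$, $$\frac{x f'(1+\zeta x)}{f(1+x)}\le\frac{2U}{L}\zeta;$$ that is, $f$ satisfies the condition below with $F(\zeta)=\frac{2U}{L}\zeta$.
   Context: The condition referred to: $f$ is a convex continuous function $(0,\infty)\to[0,\infty)$ with $f(1)=0$, twice differentiable at every $x\ne1$ with $f''(x)\ge0$, $f'(x)<0$ on $(0,1)$ and $f'(x)>0$ on $(1,\infty)$, and there is $F:\mathbb{R}^+\to\mathbb{R}^+$ with $F(\zeta)\le\mathrm{poly}(\zeta)$ such that $\frac{xf'(1+\zeta x)}{f(1+x)}\le F(\zeta)$ for all $\zeta\ge1$ and $x\in(-\frac1{2\zeta},0)\cup(0,\frac1{2\zeta})$. *)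

theory Defs
  imports "HOL-Analysis.Analysis"
begin

end

theory Submission
  imports Defs
begin

lemma mvt_any:
  fixes g g' :: "real \<Rightarrow> real"
  assumes "\<And>t. min a b \<le> t \<Longrightarrow> t \<le> max a b \<Longrightarrow> (g has_real_derivative g' t) (at t)"
  shows "\<exists>z. min a b \<le> z \<and> z \<le> max a b \<and> g b - g a = (b - a) * g' z"
proof (cases a b rule: linorder_cases)
  case less
  then obtain z where "z > a" "z < b" "g b - g a = (b - a) * g' z"
    using MVT2[of a b g g'] assms by auto
  then show ?thesis using less by (intro exI[of _ z]) auto
next
  case equal then show ?thesis by (intro exI[of _ a]) auto
next
  case greater
  then obtain z where "z > b" "z < a" "g a - g b = (a - b) * g' z"
    using MVT2[of b a g g'] assms by auto
  then show ?thesis using greater by (intro exI[of _ z]) (auto simp: algebra_simps)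
qed

theorem lemma6p1:
  fixes f f' f'' :: "real \<Rightarrow> real" and L U :: real
  assumes nonneg: "\<And>x. x > 0 \<Longrightarrow> f x \<ge> 0"
    and d1: "\<And>x. x > 0 \<Longrightarrow> (f has_real_derivative f' x) (at x)"
    and d2: "\<And>x. x > 0 \<Longrightarrow> (f' has_real_derivative f'' x) (at x)"
    and pos2: "\<And>x. x > 0 \<Longrightarrow> f'' x > 0"
    and f1: "f 1 = 0" and f'1: "f' 1 = 0"
    and LU: "L > 0" "U > 0"
    and bounds: "\<And>x. x \<in> {1/2..3/2} \<Longrightarrow> L \<le> f'' x \<and> f'' x \<le> U"
  shows "\<forall>\<zeta>::real. \<zeta> \<ge> 1 \<longrightarrow>
           (\<forall>x. x \<in> {-1/(2*\<zeta>)<..<0} \<union> {0<..<1/(2*\<zeta>)} \<longrightarrow>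
              x * f' (1 + \<zeta> * x) / f (1 + x) \<le> (2 * U / L) * \<zeta>)"
proof (intro allI impI)
  fix \<zeta> x :: real
  assume z: "\<zeta> \<ge> 1" and x: "x \<in> {-1/(2*\<zeta>)<..<0} \<union> {0<..<1/(2*\<zeta>)}"
  have x0: "x \<noteq> 0" using x by auto
  have zx: "\<bar>\<zeta> * x\<bar> < 1/2"
  proof -
    have "\<bar>x\<bar> < 1/(2*\<zeta>)" using x by auto
    then have "\<zeta> * \<bar>x\<bar> < \<zeta> * (1/(2*\<zeta>))" using z by (intro mult_strict_left_mono) auto
    then show ?thesis using z by (simp add: abs_mult)
  qed
  have xx: "\<bar>x\<bar> < 1/2"
  proof -
    have "\<bar>x\<bar> \<le> \<bar>\<zeta> * x\<bar>" using z by (simp add: abs_mult mult_le_cancel_right1)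
    then show ?thesis using zx by linarith
  qed
  obtain c where c: "min 1 (1 + \<zeta> * x) \<le> c" "c \<le> max 1 (1 + \<zeta> * x)"
    "f' (1 + \<zeta> * x) - f' 1 = (1 + \<zeta> * x - 1) * f'' c"
  proof -
    have "(f' has_real_derivative f'' t) (at t)" if "min 1 (1 + \<zeta> * x) \<le> t" "t \<le> max 1 (1 + \<zeta> * x)" for t
    proof -
      have "t > 0" using that zx by (auto simp: abs_less_iff)
      then show ?thesis by (rule d2)
    qed
    then show ?thesis using that mvt_any[of 1 "1 + \<zeta> * x" f' f''] by blast
  qed
  have cb: "c \<in> {1/2..3/2}" using c zx by auto
  have num: "x * f' (1 + \<zeta> * x) \<le> U * \<zeta> * x^2"
  proof -
    have "x * f' (1 + \<zeta> * x) = (\<zeta> * x^2) * f'' c" using c(3) f'1 by (simp add: power2_eq_square algebra_simps)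
    also have "\<dots> \<le> (\<zeta> * x^2) * U" using bounds[OF cb] z by (intro mult_left_mono) auto
    finally show ?thesis by (simp add: algebra_simps)
  qed
  define g where "g t = f (1 + t) - L * t^2 / 2" for t
  define g' where "g' t = f' (1 + t) - L * t" for t
  have gd: "(g has_real_derivative g' t) (at t)" if "min 0 x \<le> t" "t \<le> max 0 x" for t
  proof -
    have "1 + t > 0" using that xx by auto
    have "((\<lambda>t. f (1 + t)) has_real_derivative f' (1 + t)) (at t)"
    proof -
      have "((\<lambda>t. 1 + t) has_real_derivative 1) (at t)" by (auto intro!: derivative_eq_intros)
      from DERIV_chain2[OF d1[OF \<open>1 + t > 0\<close>] this] show ?thesis by simp
    qed
    then show ?thesis unfolding g_def g'_def
      by (auto intro!: derivative_eq_intros simp: power2_eq_square)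
  qed
  obtain d where d: "min 0 x \<le> d" "d \<le> max 0 x" "g x - g 0 = (x - 0) * g' d"
    using mvt_any[of 0 x g g'] gd by blast
  obtain e where e: "min 1 (1 + d) \<le> e" "e \<le> max 1 (1 + d)"
    "f' (1 + d) - f' 1 = (1 + d - 1) * f'' e"
  proof -
    have "\<bar>d\<bar> < 1/2" using d xx by auto
    have "(f' has_real_derivative f'' t) (at t)" if "min 1 (1 + d) \<le> t" "t \<le> max 1 (1 + d)" for t
    proof -
      have "t > 0" using that \<open>\<bar>d\<bar> < 1/2\<close> by (auto simp: abs_less_iff)
      then show ?thesis by (rule d2)
    qed
    then show ?thesis using that mvt_any[of 1 "1 + d" f' f''] by blast
  qed
  have eb: "e \<in> {1/2..3/2}" using e d xx by auto
  have xd: "x * d \<ge> 0" using d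
    by (cases "x \<ge> 0") (auto simp: mult_nonneg_nonneg mult_nonpos_nonpos)
  have "x * g' d = (x * d) * (f'' e - L)" unfolding g'_def using e(3) f'1 by (simp add: algebra_simps)
  also have "\<dots> \<ge> 0" using bounds[OF eb] by (intro mult_nonneg_nonneg[OF xd]) auto
  finally have "g x \<ge> 0" using d(3) f1 unfolding g_def by simp
  then have den: "f (1 + x) \<ge> L * x^2 / 2" unfolding g_def by simp
  have x2: "x^2 > 0" using x0 by simp
  have dpos: "f (1 + x) > 0" using den LU x2 by (smt (verit) mult_pos_pos half_gt_zero)
  have "x * f' (1 + \<zeta> * x) / f (1 + x) \<le> U * \<zeta> * x^2 / f (1 + x)"
    using num dpos by (simp add: divide_right_mono)
  also have "\<dots> \<le> U * \<zeta> * x^2 / (L * x^2 / 2)"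
  proof (rule divide_left_mono[OF den])
    show "0 \<le> U * \<zeta> * x^2" using LU z x2 by simp
    show "0 < f (1 + x) * (L * x\<^sup>2 / 2)" using dpos LU x2 by simp
  qed
  also have "\<dots> = (2 * U / L) * \<zeta>" using x2 LU by (simp add: field_simps)
  finally show "x * f' (1 + \<zeta> * x) / f (1 + x) \<le> (2 * U / L) * \<zeta>" .
qed

end
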